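(* Let $f$ be a $C^1$ diffeomorphism of $M=\mathbb{R}^d/\mathbb{Z}^d$ and let $\mathbf{x}\in M^{\mathbb{Z}}$ (not necessarily an orbit). Suppose that for some positive integer $n$ and constant $c_4>0$, for every $k\in\mathbb{Z}$ the operator $\Gamma_{S^k\mathbf{x}}$ is invertible on $X_n$ with $\|\Gamma_{S^k\mathbf{x}}^{-1}\|_n\le c_4$. Then $\Gamma_{\mathbf{x}}$ is invertible on $X_\infty$ and $$\|\Gamma_{\mathbf{x}}^{-1}\|_\infty\le \frac{2c_4d\sqrt d}{1-e^{-1/n}}.$$
   Context: For $\mathbf{x}=(x_k)\in M^{\mathbb{Z}}$, $(\Gamma_{\mathbf{x}}\eta)_k=\eta_k-Df(x_{k-1})\eta_{k-1}$ on sequences $\eta=(\eta_k)_{k\in\mathbb{Z}}$ in $\mathbb{R}^d$ (tangent spaces identified with $\mathbb{R}^d$, $|\cdot|$ Euclidean norm). $S$ is the shift $(S\mathbf{x})_k=x_{k-1}$. $\|\eta\|_n=\sup_k e^{-|k|/n}|\eta_k|$, $X_n=\{\|\eta\|_n<\infty\}$, $X_\infty$ bounded sequences with sup norm; operator norms are denoted by the same symbols. *)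

theory Defs
  imports "HOL-Analysis.Analysis"
begin

text \<open>The integer lattice Z^d inside R^d (R^d rendered as (real^'n), d = CARD('n)).\<close>
definition lattice :: "(real^'n) set" where
  "lattice = {m. \<forall>i. m $ i \<in> \<int>}"

text \<open>A C^1 diffeomorphism f of the torus R^d/Z^d, given by a C^1 lift F of f
  (derivative DF) and a C^1 lift G of f^{-1} (derivative DG).\<close>
definition torus_C1_diffeo ::
  "((real^'n) \<Rightarrow> (real^'n)) \<Rightarrow> ((real^'n) \<Rightarrow> ((real^'n) \<Rightarrow>\<^sub>L (real^'n))) \<Rightarrow>
   ((real^'n) \<Rightarrow> (real^'n)) \<Rightarrow> ((real^'n) \<Rightarrow> ((real^'n) \<Rightarrow>\<^sub>L (real^'n))) \<Rightarrow> bool" where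
  "torus_C1_diffeo F DF G DG \<longleftrightarrow>
     (\<forall>x. (F has_derivative blinfun_apply (DF x)) (at x)) \<and> continuous_on UNIV DF \<and>
     (\<forall>x. (G has_derivative blinfun_apply (DG x)) (at x)) \<and> continuous_on UNIV DG \<and>
     (\<forall>x m. m \<in> lattice \<longrightarrow> F (x + m) - F x \<in> lattice) \<and>
     (\<forall>x m. m \<in> lattice \<longrightarrow> G (x + m) - G x \<in> lattice) \<and>
     (\<forall>x. G (F x) - x \<in> lattice) \<and> (\<forall>y. F (G y) - y \<in> lattice)"

text \<open>Shift: (S x)_k = x_{k-1}; hence (S^k x)_j = x_{j-k}.\<close>
definition shiftp :: "int \<Rightarrow> (int \<Rightarrow> 'a) \<Rightarrow> (int \<Rightarrow> 'a)" where
  "shiftp k x = (\<lambda>j. x (j - k))"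

definition Gamma ::
  "('a \<Rightarrow> ((real^'n) \<Rightarrow>\<^sub>L (real^'n))) \<Rightarrow> (int \<Rightarrow> 'a) \<Rightarrow> (int \<Rightarrow> (real^'n)) \<Rightarrow> (int \<Rightarrow> (real^'n))" where
  "Gamma Df x \<eta> = (\<lambda>k. \<eta> k - Df (x (k - 1)) (\<eta> (k - 1)))"

definition Xn :: "nat \<Rightarrow> (int \<Rightarrow> (real^'n)) set" where
  "Xn n = {\<eta>. bdd_above (range (\<lambda>k. exp (- \<bar>real_of_int k\<bar> / real n) * norm (\<eta> k)))}"

definition normn :: "nat \<Rightarrow> (int \<Rightarrow> (real^'n)) \<Rightarrow> real" where
  "normn n \<eta> = (SUP k. exp (- \<bar>real_of_int k\<bar> / real n) * norm (\<eta> k))"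

definition Xinf :: "(int \<Rightarrow> (real^'n)) set" where
  "Xinf = {\<eta>. bdd_above (range (\<lambda>k. norm (\<eta> k)))}"

definition norminf :: "(int \<Rightarrow> (real^'n)) \<Rightarrow> real" where
  "norminf \<eta> = (SUP k. norm (\<eta> k))"

text \<open>T is invertible on the normed space (X, N) with ||T^{-1}|| <= C:
  T is a bijection of X onto X and N(T^{-1} xi) <= C N(xi), i.e. N(eta) <= C N(T eta).\<close>
definition inv_bound_on ::
  "('b set) \<Rightarrow> ('b \<Rightarrow> real) \<Rightarrow> ('b \<Rightarrow> 'b) \<Rightarrow> real \<Rightarrow> bool" where
  "inv_bound_on X N T C \<longleftrightarrow> bij_betw T X X \<and> (\<forall>\<eta>\<in>X. N \<eta> \<le> C * N (T \<eta>))"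

end

theory Submission
  imports Defs
begin

lemma Gamma_shift:
  "Gamma Df (shiftp k x) (shiftp k \<eta>) = shiftp k (Gamma Df x \<eta>)"
  by (simp add: Gamma_def shiftp_def algebra_simps)

lemma exp_shift_le:
  assumes "n > 0"
  shows "exp (- \<bar>real_of_int j\<bar> / real n) * exp (\<bar>real_of_int (j+m)\<bar> / real n)
         \<le> exp (\<bar>real_of_int m\<bar> / real n)"
proof -
  have "- \<bar>real_of_int j\<bar> / real n + \<bar>real_of_int (j+m)\<bar> / real n \<le> \<bar>real_of_int m\<bar> / real n"
    using assms by (simp add: divide_simps)
  then show ?thesis by (simp add: exp_add[symmetric])
qed

lemma exp_shift_ge:
  assumes "n > 0"
  shows "exp (- 1 / real n) \<le> exp (- \<bar>real_of_int k\<bar> / real n) * exp (\<bar>real_of_int (k - 1)\<bar> / real n)"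
proof -
  have "- 1 / real n \<le> - \<bar>real_of_int k\<bar> / real n + \<bar>real_of_int (k - 1)\<bar> / real n"
    using assms by (simp add: divide_simps)
  then show ?thesis by (simp add: exp_add[symmetric])
qed

lemma Xn_shift:
  assumes "n > 0" "\<eta> \<in> Xn n"
  shows "shiftp k \<eta> \<in> Xn n"
proof -
  obtain B where B: "\<And>j. exp (- \<bar>real_of_int j\<bar> / real n) * norm (\<eta> j) \<le> B"
    using assms(2) unfolding Xn_def bdd_above_def by auto
  have "exp (- \<bar>real_of_int j\<bar> / real n) * norm (shiftp k \<eta> j) \<le> exp (\<bar>real_of_int (-k)\<bar> / real n) * B" for j
  proof -
    have "exp (- \<bar>real_of_int j\<bar> / real n) * norm (shiftp k \<eta> j)
        = (exp (- \<bar>real_of_int j\<bar> / real n) * exp (\<bar>real_of_int (j + -k)\<bar> / real n))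
          * (exp (- \<bar>real_of_int (j - k)\<bar> / real n) * norm (\<eta> (j - k)))"
      by (simp add: shiftp_def exp_minus field_simps)
    also have "\<dots> \<le> exp (\<bar>real_of_int (-k)\<bar> / real n) * B"
      by (rule mult_mono[OF exp_shift_le[OF assms(1)] B]) auto
    finally show ?thesis .
  qed
  then show ?thesis unfolding Xn_def mem_Collect_eq by (rule bdd_aboveI2)
qed

lemma Xinf_sub_Xn:
  assumes "n > 0" "\<eta> \<in> Xinf"
  shows "\<eta> \<in> Xn n"
proof -
  obtain B where B: "\<And>j. norm (\<eta> j) \<le> B"
    using assms(2) unfolding Xinf_def bdd_above_def by auto
  have "exp (- \<bar>real_of_int j\<bar> / real n) * norm (\<eta> j) \<le> 1 * B" for j
    by (rule mult_mono[OF _ B]) auto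
  then have "exp (- \<bar>real_of_int j\<bar> / real n) * norm (\<eta> j) \<le> B" for j by simp
  then show ?thesis unfolding Xn_def mem_Collect_eq by (rule bdd_aboveI2)
qed

lemma norm0_le_normn:
  assumes "\<eta> \<in> Xn n"
  shows "norm (\<eta> 0) \<le> normn n \<eta>"
proof -
  have "exp (- \<bar>real_of_int (0::int)\<bar> / real n) * norm (\<eta> 0) \<le> normn n \<eta>"
    unfolding normn_def using assms unfolding Xn_def by (intro cSUP_upper) auto
  then show ?thesis by simp
qed

lemma normn_shift_le:
  assumes "\<xi> \<in> Xinf"
  shows "normn n (shiftp k \<xi>) \<le> norminf \<xi>"
  unfolding normn_def
proof (rule cSUP_least)
  fix j
  have "exp (- \<bar>real_of_int j\<bar> / real n) * norm (shiftp k \<xi> j) \<le> norm (\<xi> (j - k))"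
    by (auto simp: shiftp_def intro!: mult_left_le_one_le)
  also have "\<dots> \<le> norminf \<xi>"
  proof -
    have "bdd_above (range (\<lambda>k. norm (\<xi> k)))" using assms unfolding Xinf_def by simp
    then show ?thesis unfolding norminf_def by (rule cSUP_upper[OF UNIV_I])
  qed
  finally show "exp (- \<bar>real_of_int j\<bar> / real n) * norm (shiftp k \<xi> j) \<le> norminf \<xi>" .
qed simp

lemma norminf_nonneg: "\<xi> \<in> Xinf \<Longrightarrow> 0 \<le> norminf \<xi>"
proof -
  assume "\<xi> \<in> Xinf"
  then have "bdd_above (range (\<lambda>k. norm (\<xi> k)))" unfolding Xinf_def by simp
  then have "norm (\<xi> 0) \<le> norminf \<xi>" unfolding norminf_def by (rule cSUP_upper[OF UNIV_I])
  then show ?thesis using norm_ge_zero order_trans by blast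
qed

lemma col_bound:
  fixes A :: "int \<Rightarrow> ((real^'n) \<Rightarrow>\<^sub>L (real^'n))"
  assumes n: "n > 0" and img: "\<And>\<eta>. \<eta> \<in> Xn n \<Longrightarrow> (\<lambda>k. \<eta> k - A (k - 1) (\<eta> (k - 1))) \<in> Xn n"
    and b: "b \<in> Basis"
  shows "\<exists>K. \<forall>j. norm (A j b) \<le> K"
proof -
  define \<eta> :: "int \<Rightarrow> real^'n" where "\<eta> = (\<lambda>j. exp (\<bar>real_of_int j\<bar> / real n) *\<^sub>R b)"
  have nb: "norm b = 1" using b by simp
  have nrm: "norm (\<eta> j) = exp (\<bar>real_of_int j\<bar> / real n)" for j
    unfolding \<eta>_def using nb by simp
  have w1: "exp (- \<bar>real_of_int j\<bar> / real n) * norm (\<eta> j) = 1" for j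
    unfolding nrm by (simp add: exp_add[symmetric])
  have "\<eta> \<in> Xn n" unfolding Xn_def mem_Collect_eq w1 by simp
  from img[OF this] obtain B where
    B: "\<And>k. exp (- \<bar>real_of_int k\<bar> / real n) * norm (\<eta> k - A (k - 1) (\<eta> (k - 1))) \<le> B"
    unfolding Xn_def bdd_above_def by auto
  have "norm (A j b) \<le> (1 + B) / exp (- 1 / real n)" for j
  proof -
    let ?k = "j + 1"
    let ?w = "exp (- \<bar>real_of_int ?k\<bar> / real n)"
    have "norm (A j (\<eta> j)) \<le> norm (\<eta> ?k) + norm (\<eta> ?k - A j (\<eta> j))"
      by (metis norm_triangle_sub add.commute norm_minus_commute)
    then have "?w * norm (A j (\<eta> j)) \<le> ?w * norm (\<eta> ?k) + ?w * norm (\<eta> ?k - A j (\<eta> j))"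
      by (simp add: distrib_left[symmetric] mult_left_mono)
    also have "\<dots> \<le> 1 + B" using w1[of ?k] B[of ?k] by simp
    finally have 1: "?w * norm (A j (\<eta> j)) \<le> 1 + B" .
    have "A j (\<eta> j) = exp (\<bar>real_of_int j\<bar> / real n) *\<^sub>R A j b"
      unfolding \<eta>_def by (simp add: blinfun.scaleR_right)
    then have "?w * norm (A j (\<eta> j)) = (?w * exp (\<bar>real_of_int (?k - 1)\<bar> / real n)) * norm (A j b)"
      by simp
    with 1 have 2: "(?w * exp (\<bar>real_of_int (?k - 1)\<bar> / real n)) * norm (A j b) \<le> 1 + B" by simp
    have "exp (- 1 / real n) * norm (A j b) \<le> (?w * exp (\<bar>real_of_int (?k - 1)\<bar> / real n)) * norm (A j b)"
      by (rule mult_right_mono[OF exp_shift_ge[OF n]]) simp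
    with 2 have "exp (- 1 / real n) * norm (A j b) \<le> 1 + B" by linarith
    then show ?thesis by (simp add: field_simps)
  qed
  then show ?thesis by blast
qed

lemma op_bound:
  fixes A :: "int \<Rightarrow> ((real^'n) \<Rightarrow>\<^sub>L (real^'n))"
  assumes n: "n > 0" and img: "\<And>\<eta>. \<eta> \<in> Xn n \<Longrightarrow> (\<lambda>k. \<eta> k - A (k - 1) (\<eta> (k - 1))) \<in> Xn n"
  shows "\<exists>K. \<forall>j v. norm (A j v) \<le> K * norm v"
proof -
  have "\<forall>b\<in>Basis. \<exists>K. \<forall>j. norm (A j b) \<le> K" using col_bound[OF n img] by blast
  then obtain K where K: "\<And>b j. b \<in> Basis \<Longrightarrow> norm (A j b) \<le> K b" by metis
  have "norm (A j v) \<le> (\<Sum>b\<in>Basis. K b) * norm v" for j v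
  proof -
    have "A j v = A j (\<Sum>b\<in>Basis. (v \<bullet> b) *\<^sub>R b)" by (simp add: euclidean_representation)
    also have "\<dots> = (\<Sum>b\<in>Basis. (v \<bullet> b) *\<^sub>R A j b)"
      by (simp add: blinfun.sum_right blinfun.scaleR_right)
    finally have "norm (A j v) \<le> (\<Sum>b\<in>Basis. norm ((v \<bullet> b) *\<^sub>R A j b))"
      by (metis norm_sum)
    also have "\<dots> \<le> (\<Sum>b\<in>Basis. norm v * K b)"
    proof (rule sum_mono)
      fix b :: "real^'n" assume bB: "b \<in> Basis"
      have "norm ((v \<bullet> b) *\<^sub>R A j b) = \<bar>v \<bullet> b\<bar> * norm (A j b)" by simp
      also have "\<dots> \<le> norm v * K b"
        by (rule mult_mono[OF Basis_le_norm[OF bB] K[OF bB]]) auto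
      finally show "norm ((v \<bullet> b) *\<^sub>R A j b) \<le> norm v * K b" .
    qed
    finally show ?thesis by (simp add: sum_distrib_left mult.commute)
  qed
  then show ?thesis by blast
qed


theorem lemma2p3:
  fixes F G :: "(real^'n) \<Rightarrow> (real^'n)"
    and DF DG :: "(real^'n) \<Rightarrow> ((real^'n) \<Rightarrow>\<^sub>L (real^'n))"
    and x :: "int \<Rightarrow> (real^'n)"
    and n :: nat and c4 :: real
  assumes "torus_C1_diffeo F DF G DG"
    and "n > 0" and "c4 > 0"
    and "\<forall>k::int. inv_bound_on (Xn n) (normn n) (Gamma DF (shiftp k x)) c4"
  shows "inv_bound_on Xinf norminf (Gamma DF x)
           (2 * c4 * real CARD('n) * sqrt (real CARD('n)) / (1 - exp (- 1 / real n)))"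
proof -
  note n = assms(2)
  have sh0: "shiftp 0 x = x" by (simp add: shiftp_def)
  have H0: "inv_bound_on (Xn n) (normn n) (Gamma DF x) c4"
    using assms(4)[rule_format, of 0] by (simp add: sh0)
  then have bij0: "bij_betw (Gamma DF x) (Xn n) (Xn n)" unfolding inv_bound_on_def by simp
  have img: "\<eta> \<in> Xn n \<Longrightarrow> (\<lambda>k. \<eta> k - DF (x (k - 1)) (\<eta> (k - 1))) \<in> Xn n" for \<eta>
    using bij_betw_apply[OF bij0] unfolding Gamma_def by blast
  obtain K where K: "\<And>j v. norm (DF (x j) v) \<le> K * norm v"
    using op_bound[of n "\<lambda>j. DF (x j)", OF n img] by blast
  have key: "norm (\<eta> m) \<le> c4 * norminf (Gamma DF x \<eta>)"
    if e: "\<eta> \<in> Xn n" and g: "Gamma DF x \<eta> \<in> Xinf" for \<eta> m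
  proof -
    have e': "shiftp (-m) \<eta> \<in> Xn n" by (rule Xn_shift[OF n e])
    have "norm (\<eta> m) = norm (shiftp (-m) \<eta> 0)" by (simp add: shiftp_def)
    also have "\<dots> \<le> normn n (shiftp (-m) \<eta>)" by (rule norm0_le_normn[OF e'])
    also have "\<dots> \<le> c4 * normn n (Gamma DF (shiftp (-m) x) (shiftp (-m) \<eta>))"
      using assms(4)[rule_format, of "-m"] e' unfolding inv_bound_on_def by blast
    also have "\<dots> = c4 * normn n (shiftp (-m) (Gamma DF x \<eta>))" by (simp add: Gamma_shift)
    also have "\<dots> \<le> c4 * norminf (Gamma DF x \<eta>)"
      using normn_shift_le[OF g] assms(3) by (simp add: mult_left_mono)
    finally show ?thesis .
  qed
  have bdd_inf: "\<eta> \<in> Xinf \<and> norminf \<eta> \<le> c4 * norminf (Gamma DF x \<eta>)"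
    if e: "\<eta> \<in> Xn n" and g: "Gamma DF x \<eta> \<in> Xinf" for \<eta>
  proof
    show "\<eta> \<in> Xinf" unfolding Xinf_def mem_Collect_eq
      by (rule bdd_aboveI2[OF key[OF e g]])
    show "norminf \<eta> \<le> c4 * norminf (Gamma DF x \<eta>)" unfolding norminf_def
      by (rule cSUP_least) (auto intro: key[OF e g, unfolded norminf_def])
  qed
  have maps: "Gamma DF x \<eta> \<in> Xinf" if e: "\<eta> \<in> Xinf" for \<eta>
  proof -
    obtain M where M: "\<And>j. norm (\<eta> j) \<le> M"
      using e unfolding Xinf_def bdd_above_def by auto
    have "norm (Gamma DF x \<eta> k) \<le> M + \<bar>K\<bar> * M" for k
    proof -
      have "norm (Gamma DF x \<eta> k) \<le> norm (\<eta> k) + norm (DF (x (k - 1)) (\<eta> (k - 1)))"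
        unfolding Gamma_def by (rule norm_triangle_ineq4)
      also have "\<dots> \<le> M + \<bar>K\<bar> * M"
      proof (rule add_mono[OF M])
        have K0: "\<bar>K\<bar> \<ge> 0" by simp
        have "K * norm (\<eta> (k-1)) \<le> \<bar>K\<bar> * norm (\<eta> (k-1))"
          by (rule mult_right_mono) auto
        note kk = this
        show "norm (DF (x (k - 1)) (\<eta> (k - 1))) \<le> \<bar>K\<bar> * M"
          using K[of "k-1" "\<eta> (k-1)"] mult_left_mono[OF M[of "k-1"] K0] kk by linarith
      qed
      finally show ?thesis .
    qed
    then show ?thesis unfolding Xinf_def mem_Collect_eq by (rule bdd_aboveI2)
  qed
  have sub: "Xinf \<subseteq> Xn n" using Xinf_sub_Xn[OF n] by blast
  have bij: "bij_betw (Gamma DF x) Xinf Xinf"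
    unfolding bij_betw_def
  proof
    show "inj_on (Gamma DF x) Xinf"
      using bij_betw_imp_inj_on[OF bij0] sub inj_on_subset by blast
    show "Gamma DF x ` Xinf = Xinf"
    proof
      show "Gamma DF x ` Xinf \<subseteq> Xinf" using maps by blast
      show "Xinf \<subseteq> Gamma DF x ` Xinf"
      proof
        fix \<xi> :: "int \<Rightarrow> real^'n" assume xi: "\<xi> \<in> Xinf"
        then have "\<xi> \<in> Xn n" using sub by blast
        then obtain \<eta> where e: "\<eta> \<in> Xn n" and eq: "\<xi> = Gamma DF x \<eta>"
          using bij_betw_imp_surj_on[OF bij0] by blast
        then have "\<eta> \<in> Xinf" using bdd_inf[of \<eta>] xi by blast
        then show "\<xi> \<in> Gamma DF x ` Xinf" using eq by blast
      qed
    qed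
  qed
  define C where "C = 2 * c4 * real CARD('n) * sqrt (real CARD('n)) / (1 - exp (- 1 / real n))"
  have cC: "c4 \<le> C"
  proof -
    have d1: "real CARD('n) \<ge> 1" by simp
    then have s1: "sqrt (real CARD('n)) \<ge> 1" by simp
    have e0: "exp (- 1 / real n) > 0" by simp
    have e1: "exp (- 1 / real n) < 1" using n by simp
    have cd: "c4 * 1 \<le> c4 * (real CARD('n) * sqrt (real CARD('n)))"
    proof (rule mult_left_mono)
      have "1 * 1 \<le> real CARD('n) * sqrt (real CARD('n))"
        by (rule mult_mono[OF d1 s1]) auto
      then show "1 \<le> real CARD('n) * sqrt (real CARD('n))" by simp
    qed (use assms(3) in simp)
    have "c4 * (1 - exp (- 1 / real n)) \<le> 2 * c4 * real CARD('n) * sqrt (real CARD('n))"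
    proof -
      have a: "c4 * (1 - exp (- 1 / real n)) \<le> c4 * 1"
        using assms(3) e0 by (intro mult_left_mono) auto
      have b: "c4 * (real CARD('n) * sqrt (real CARD('n))) \<ge> 0" using cd assms(3) by linarith
      have "2 * c4 * real CARD('n) * sqrt (real CARD('n)) = 2 * (c4 * (real CARD('n) * sqrt (real CARD('n))))"
        by (simp add: mult.assoc)
      then show ?thesis using a b cd by linarith
    qed
    then show ?thesis unfolding C_def using e1 by (simp add: pos_le_divide_eq)
  qed
  have "norminf \<eta> \<le> C * norminf (Gamma DF x \<eta>)" if e: "\<eta> \<in> Xinf" for \<eta>
  proof -
    have "norminf \<eta> \<le> c4 * norminf (Gamma DF x \<eta>)"
      using bdd_inf[OF subsetD[OF sub e] maps[OF e]] by blast
    also have "\<dots> \<le> C * norminf (Gamma DF x \<eta>)"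
      by (rule mult_right_mono[OF cC norminf_nonneg[OF maps[OF e]]])
    finally show ?thesis .
  qed
  then show ?thesis unfolding inv_bound_on_def C_def using bij by blast
qed

end
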